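(* The expected cost of the direct referral reward scheme on the chain defined in the context is $\Theta(P_h^2\,n\,h^2)$.
   Context: Chain with agents at positions $1,2,\dots$, each independently holding an answer with probability $p=1/n$; $h\ge1$. $r(i,s)$ is the reward to the agent at position $i$ when the first answer is at position $i+s\le h$; if there is no answer among positions $1,\dots,h$ nothing is paid. Let $P_i=\sum_{j=1}^i p(1-p)^{j-1}$ and $R_i=\sum_{s=1}^{h-i} r(i,s)p(1-p)^{s-1}$ (so $R_h=0$). The scheme is defined backwards by: $r(i,1)=nR_{i+1}+P_{h-i-1}$ for $i\le h-1$; $r(i,0)=\sum_{t=i}^{h-1}r(t,1)+1$ for $1\le i\le h$; $r(i,s)=1$ if $i+s\le h$ and $s>1$; $r(i,s)=0$ otherwise. The expected cost is $\mathbb{E}[\sum_{i=1}^{J}r(i,J-i)]$ where $J$ is the position of the first answer if $J\le h$ (empty sum otherwise). *)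

theory Defs
  imports Complex_Main
begin

text \<open>Chain with agents at positions 1,2,..., each holding an answer independently
  with probability p = 1/n.  Horizon h.\<close>

definition prob :: "nat \<Rightarrow> real" where
  "prob n = 1 / real n"

definition Pc :: "nat \<Rightarrow> nat \<Rightarrow> real" where
  "Pc n i = (\<Sum>j=1..i. prob n * (1 - prob n) ^ (j - 1))"

text \<open>The direct referral reward scheme: reward n h i s = r(i,s), the reward paid to
  the agent at position i when the first answer is at position i+s.
  r(i,1) = n R_{i+1} + P_{h-i-1} (i \<le> h-1), with
  R_{i+1} = sum_{s=1}^{h-(i+1)} r(i+1,s) p (1-p)^(s-1);
  r(i,0) = sum_{t=i}^{h-1} r(t,1) + 1 (1 \<le> i \<le> h);
  r(i,s) = 1 if i+s \<le> h and s > 1; 0 otherwise.\<close>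
function reward :: "nat \<Rightarrow> nat \<Rightarrow> nat \<Rightarrow> nat \<Rightarrow> real" where
  "reward n h i s =
    (if 1 \<le> i \<and> i + s \<le> h then
       (if s = 0 then (\<Sum>t=i..h-1. reward n h t 1) + 1
        else if s = 1 then
          real n * (\<Sum>s'=1..h-(i+1). reward n h (i+1) s' * prob n * (1 - prob n) ^ (s' - 1))
          + Pc n (h - i - 1)
        else 1)
     else 0)"
  by pat_completeness auto
termination
  by (relation "measure (\<lambda>(n,h,i,s). 2*(h-i) + (if s = 0 then 1 else 0))") auto

definition Rc :: "nat \<Rightarrow> nat \<Rightarrow> nat \<Rightarrow> real" where
  "Rc n h i = (\<Sum>s=1..h-i. reward n h i s * prob n * (1 - prob n) ^ (s - 1))"

text \<open>Expected cost E[sum_{i=1}^J r(i,J-i)], J the position of the first answer,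
  which equals j with probability p(1-p)^(j-1); nothing is paid if J > h.\<close>
definition expected_cost :: "nat \<Rightarrow> nat \<Rightarrow> real" where
  "expected_cost n h =
     (\<Sum>j=1..h. prob n * (1 - prob n) ^ (j - 1) * (\<Sum>i=1..j. reward n h i (j - i)))"

end

theory Submission
  imports Defs
begin

lemma reward_eq: "reward n h i s =
    (if 1 \<le> i \<and> i + s \<le> h then
       (if s = 0 then (\<Sum>t=i..h-1. reward n h t 1) + 1
        else if s = 1 then
          real n * (\<Sum>s'=1..h-(i+1). reward n h (i+1) s' * prob n * (1 - prob n) ^ (s' - 1))
          + Pc n (h - i - 1)
        else 1)
     else 0)"
  by (rule reward.simps)

declare reward.simps[simp del]

lemma R0: "1 \<le> i \<Longrightarrow> i \<le> h \<Longrightarrow> reward n h i 0 = (\<Sum>t=i..h-1. reward n h t 1) + 1"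
  by (subst reward_eq) simp
lemma R1: "1 \<le> i \<Longrightarrow> i + 1 \<le> h \<Longrightarrow> reward n h i 1 =
   real n * (\<Sum>s'=1..h-(i+1). reward n h (i+1) s' * prob n * (1 - prob n) ^ (s' - 1))
          + Pc n (h - i - 1)"
  by (subst reward_eq) simp
lemma R2: "1 \<le> i \<Longrightarrow> i + s \<le> h \<Longrightarrow> 2 \<le> s \<Longrightarrow> reward n h i s = 1"
  by (subst reward_eq) simp
lemma R3: "\<not> (1 \<le> i \<and> i + s \<le> h) \<Longrightarrow> reward n h i s = 0"
  by (subst reward_eq, rule if_not_P)

lemma Pc0[simp]: "Pc n 0 = 0" by (simp add: Pc_def)
lemma PcSuc: "Pc n (Suc m) = Pc n m + prob n * (1 - prob n) ^ m"
  by (simp add: Pc_def)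

context fixes n :: nat assumes n: "n \<ge> 1" begin

lemma p_pos: "0 < prob n" "prob n \<le> 1" "real n * prob n = 1" "0 \<le> 1 - prob n" "1 - prob n \<le> 1"
  using n by (auto simp: prob_def)

lemma Pc_closed: "Pc n m = 1 - (1 - prob n) ^ m"
  by (induction m) (simp_all add: PcSuc algebra_simps)

lemma Pc_nonneg: "0 \<le> Pc n m"
  unfolding Pc_def using p_pos by (auto intro!: sum_nonneg)

lemma Pc_mono: "m \<le> k \<Longrightarrow> Pc n m \<le> Pc n k"
  unfolding Pc_closed using p_pos by (simp add: power_decreasing)

lemma Pc_le: "real n * Pc n m \<le> real m"
proof (induction m)
  case (Suc m)
  have "real n * (prob n * (1 - prob n) ^ m) \<le> 1"
    using p_pos by (simp add: mult.assoc[symmetric] power_le_one)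
  then show ?case using Suc by (simp add: PcSuc distrib_left)
qed simp

lemma Pc_ge: "m \<ge> 1 \<Longrightarrow> 1 \<le> real n * Pc n m"
proof -
  assume "m \<ge> 1"
  then have "Pc n 1 \<le> Pc n m" by (rule Pc_mono)
  moreover have "Pc n 1 = prob n" using PcSuc[of n 0] by simp
  ultimately show ?thesis using p_pos n by (metis mult_left_mono of_nat_0_le_iff)
qed

lemma Pc_le1: "Pc n m \<le> 1"
  unfolding Pc_closed using p_pos by simp

lemma dstep: "real n * Pc n (Suc k) - 1 = (real n - 1) * Pc n k"
  unfolding Pc_closed using n by (simp add: prob_def algebra_simps)

lemma concave_step: "real h * (1 - (1 - prob n) ^ Suc h) \<le> real (Suc h) * (1 - (1 - prob n) ^ h)"
proof -
  define q where "q = 1 - prob n"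
  have q: "0 \<le> q" "q \<le> 1" using p_pos by (auto simp: q_def)
  have "real h * q ^ h \<le> (\<Sum>i<h. q ^ i)"
  proof -
    have "(\<Sum>i<h. q ^ h) \<le> (\<Sum>i<h. q ^ i)"
      by (rule sum_mono) (use q in \<open>auto intro: power_decreasing\<close>)
    then show ?thesis by simp
  qed
  then have "(1 - q) * (real h * q ^ h) \<le> (1 - q) * (\<Sum>i<h. q ^ i)"
    using q by (intro mult_left_mono) auto
  also have "\<dots> = 1 - q ^ h" by (simp add: one_diff_power_eq)
  finally show ?thesis unfolding q_def[symmetric] by (simp add: algebra_simps)
qed

lemma concave: "m \<le> h \<Longrightarrow> real m * Pc n h \<le> real h * Pc n m"
proof (induction h)
  case 0 then show ?case by simp
next
  case (Suc h)
  show ?case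
  proof (cases "m = Suc h")
    case True then show ?thesis by simp
  next
    case False
    then have mh: "m \<le> h" using Suc by simp
    have IH: "real m * Pc n h \<le> real h * Pc n m" using Suc mh by simp
    have st: "real h * Pc n (Suc h) \<le> real (Suc h) * Pc n h"
      using concave_step[of h] by (simp add: Pc_closed)
    show ?thesis
    proof (cases "h = 0")
      case True then show ?thesis using mh by simp
    next
      case False
      have "real h * (real m * Pc n (Suc h)) = real m * (real h * Pc n (Suc h))" by simp
      also have "\<dots> \<le> real m * (real (Suc h) * Pc n h)" using st by (intro mult_left_mono) auto
      also have "\<dots> = real (Suc h) * (real m * Pc n h)" by simp
      also have "\<dots> \<le> real (Suc h) * (real h * Pc n m)" using IH by (intro mult_left_mono) auto
      also have "\<dots> = real h * (real (Suc h) * Pc n m)" by simp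
      finally show ?thesis using False by simp
    qed
  qed
qed


lemma b_last: "h \<ge> 2 \<Longrightarrow> reward n h (h-1) 1 = 0"
  by (subst R1) auto

lemma b_rec: assumes i: "1 \<le> i" "i + 2 \<le> h"
  shows "reward n h i 1 = reward n h (i+1) 1 + (real n + 1) * Pc n (h-i-1) - 1"
proof -
  define K where "K = h - (i+1)"
  have K: "1 \<le> K" using i by (simp add: K_def)
  define f where "f s' = reward n h (i+1) s' * prob n * (1 - prob n) ^ (s' - 1)" for s'
  have "(\<Sum>s'=1..K. f s') = f 1 + (\<Sum>s'=Suc 1..K. f s')"
    using K by (rule sum.atLeast_Suc_atMost)
  also have "(\<Sum>s'=Suc 1..K. f s') = (\<Sum>s'=Suc 1..K. prob n * (1 - prob n) ^ (s' - 1))"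
    by (rule sum.cong) (use i in \<open>auto simp: f_def K_def R2\<close>)
  also have "\<dots> = Pc n K - prob n"
    unfolding Pc_def using sum.atLeast_Suc_atMost[OF K, of "\<lambda>j. prob n * (1 - prob n) ^ (j - 1)"] by simp
  finally have S: "(\<Sum>s'=1..K. f s') = reward n h (i+1) 1 * prob n + Pc n K - prob n"
    by (simp add: f_def)
  have "reward n h i 1 = real n * (\<Sum>s'=1..K. f s') + Pc n K"
    using i by (subst R1) (auto simp: f_def K_def)
  also have "\<dots> = reward n h (i+1) 1 * (real n * prob n) + real n * Pc n K - real n * prob n + Pc n K"
    unfolding S by (simp add: algebra_simps)
  finally show ?thesis using p_pos by (simp add: K_def algebra_simps)
qed


lemma choose2_Suc: "Suc k choose 2 = k + (k choose 2)"
  by (simp add: numeral_2_eq_2)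
lemma choose3_Suc: "Suc k choose 3 = (k choose 2) + (k choose 3)"
  by (simp add: numeral_3_eq_3 numeral_2_eq_2)

lemma b_bounds: "1 \<le> i \<Longrightarrow> i + 1 + k = h \<Longrightarrow>
   0 \<le> reward n h i 1 \<and> reward n h i 1 \<le> real k * ((real n + 1) * Pc n h) \<and>
   real n * Pc n h / real h * real (k choose 2) \<le> reward n h i 1"
proof (induction k arbitrary: i)
  case 0
  then have "i = h - 1" "h \<ge> 2" by auto
  then show ?case using b_last[of h] by (simp add: numeral_2_eq_2)
next
  case (Suc k)
  have br: "reward n h i 1 = reward n h (i+1) 1 + ((real n + 1) * Pc n (Suc k) - 1)"
  proof -
    have "h - i - 1 = Suc k" using Suc.prems by simp
    then show ?thesis using b_rec[of i h] Suc.prems by simp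
  qed
  have IH: "0 \<le> reward n h (i+1) 1 \<and> reward n h (i+1) 1 \<le> real k * ((real n + 1) * Pc n h) \<and>
   real n * Pc n h / real h * real (k choose 2) \<le> reward n h (i+1) 1"
    using Suc.IH[of "i+1"] Suc.prems by simp
  have h1: "1 \<le> real n * Pc n (Suc k)" by (rule Pc_ge) simp
  have d0: "0 \<le> (real n + 1) * Pc n (Suc k) - 1" using h1 Pc_nonneg[of "Suc k"] by (simp add: algebra_simps)
  have kh: "Suc k \<le> h" using Suc.prems by simp
  have "Pc n (Suc k) \<le> Pc n h" using kh by (rule Pc_mono)
  then have d1: "(real n + 1) * Pc n (Suc k) - 1 \<le> (real n + 1) * Pc n h"
    using Pc_nonneg[of "Suc k"] by (smt (verit) mult_left_mono of_nat_0_le_iff)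
  have "(real n + 1) * Pc n (Suc k) - 1 = (real n - 1) * Pc n k + Pc n (Suc k)"
    using dstep[of k] by (simp add: algebra_simps)
  also have "\<dots> \<ge> (real n - 1) * Pc n k + Pc n k" using Pc_mono[of k "Suc k"] by simp
  finally have d2a: "real n * Pc n k \<le> (real n + 1) * Pc n (Suc k) - 1" by (simp add: algebra_simps)
  have hpos: "real h > 0" using kh by simp
  have "real k * Pc n h \<le> real h * Pc n k" using kh by (intro concave) simp
  then have "real n * (real k * Pc n h) \<le> real n * (real h * Pc n k)" by (intro mult_left_mono) auto
  then have "real n * Pc n h / real h * real k \<le> real n * Pc n k"
    using hpos by (simp add: field_simps)
  with d2a have d2: "real n * Pc n h / real h * real k \<le> (real n + 1) * Pc n (Suc k) - 1" by simp
  show ?case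
  proof (intro conjI)
    show "0 \<le> reward n h i 1" using br IH d0 by simp
    show "reward n h i 1 \<le> real (Suc k) * ((real n + 1) * Pc n h)"
      using br IH d1 by (simp add: algebra_simps)
    show "real n * Pc n h / real h * real (Suc k choose 2) \<le> reward n h i 1"
    proof -
      have "real n * Pc n h / real h * real (Suc k choose 2) =
          real n * Pc n h / real h * real k + real n * Pc n h / real h * real (k choose 2)"
        by (simp add: choose2_Suc distrib_left)
      then show ?thesis using br IH d2 by linarith
    qed
  qed
qed


lemma r0_rec: "1 \<le> j \<Longrightarrow> j + 1 \<le> h \<Longrightarrow> reward n h j 0 = reward n h j 1 + reward n h (j+1) 0"
  using sum.atLeast_Suc_atMost[of j "h-1" "\<lambda>t. reward n h t 1"]
  by (simp add: R0)

lemma r0_last: "1 \<le> h \<Longrightarrow> reward n h h 0 = 1"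
  by (simp add: R0)

lemma r0_bounds: "1 \<le> j \<Longrightarrow> j + k = h \<Longrightarrow>
   1 \<le> reward n h j 0 \<and> reward n h j 0 \<le> real k * (real h * ((real n + 1) * Pc n h)) + 1 \<and>
   real n * Pc n h / real h * real (k choose 3) + 1 \<le> reward n h j 0"
proof (induction k arbitrary: j)
  case 0 then show ?case using r0_last[of h] by (simp add: numeral_3_eq_3)
next
  case (Suc k)
  have rr: "reward n h j 0 = reward n h j 1 + reward n h (j+1) 0"
    using Suc.prems by (intro r0_rec) auto
  have IH: "1 \<le> reward n h (j+1) 0 \<and> reward n h (j+1) 0 \<le> real k * (real h * ((real n + 1) * Pc n h)) + 1 \<and>
   real n * Pc n h / real h * real (k choose 3) + 1 \<le> reward n h (j+1) 0"
    using Suc.IH[of "j+1"] Suc.prems by simp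
  have B: "0 \<le> reward n h j 1 \<and> reward n h j 1 \<le> real k * ((real n + 1) * Pc n h) \<and>
   real n * Pc n h / real h * real (k choose 2) \<le> reward n h j 1"
    using b_bounds[of j k h] Suc.prems by simp
  have kh: "real k \<le> real h" using Suc.prems by simp
  have "real k * ((real n + 1) * Pc n h) \<le> real h * ((real n + 1) * Pc n h)"
    using kh Pc_nonneg[of h] by (intro mult_right_mono) auto
  then have B2: "reward n h j 1 \<le> real h * ((real n + 1) * Pc n h)" using B by linarith
  have C3: "real n * Pc n h / real h * real (Suc k choose 3) =
          real n * Pc n h / real h * real (k choose 2) + real n * Pc n h / real h * real (k choose 3)"
    by (simp add: choose3_Suc distrib_left)
  show ?case
  proof (intro conjI)
    show "1 \<le> reward n h j 0" using rr IH B by linarith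
    show "reward n h j 0 \<le> real (Suc k) * (real h * ((real n + 1) * Pc n h)) + 1"
      using rr IH B2 by (simp add: algebra_simps)
    show "real n * Pc n h / real h * real (Suc k choose 3) + 1 \<le> reward n h j 0"
      using rr IH B C3 by linarith
  qed
qed

lemma reward_nonneg: "0 \<le> reward n h i s"
proof (cases "1 \<le> i \<and> i + s \<le> h")
  case False then show ?thesis by (simp add: R3)
next
  case True
  show ?thesis
  proof (cases "s = 0")
    case True
    then show ?thesis using r0_bounds[of i "h - i" h] \<open>1 \<le> i \<and> i + s \<le> h\<close> by auto
  next
    case s0: False
    show ?thesis
    proof (cases "s = 1")
      case True
      then show ?thesis using b_bounds[of i "h - i - 1" h] \<open>1 \<le> i \<and> i + s \<le> h\<close> by auto
    next
      case False
      then show ?thesis using s0 True by (simp add: R2)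
    qed
  qed
qed

lemma reward_pos_le: "1 \<le> s \<Longrightarrow> reward n h i s \<le> real h * ((real n + 1) * Pc n h) + 1"
proof (cases "1 \<le> i \<and> i + s \<le> h")
  case False
  have "0 \<le> real h * ((real n + 1) * Pc n h)" using Pc_nonneg[of h] by simp
  then show ?thesis using False by (simp add: R3)
next
  case True
  assume s: "1 \<le> s"
  show ?thesis
  proof (cases "s = 1")
    case s1: True
    have B: "reward n h i 1 \<le> real (h - i - 1) * ((real n + 1) * Pc n h)"
      using b_bounds[of i "h - i - 1" h] True s1 by auto
    have M: "real (h - i - 1) * ((real n + 1) * Pc n h) \<le> real h * ((real n + 1) * Pc n h)"
      using Pc_nonneg[of h] by (intro mult_right_mono) auto
    show ?thesis unfolding s1 using B M by linarith
  next
    case False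
    then have "reward n h i s = 1" using s True by (intro R2) auto
    moreover have "0 \<le> real h * ((real n + 1) * Pc n h)" using Pc_nonneg[of h] by simp
    ultimately show ?thesis by simp
  qed
qed


lemma I_split: "1 \<le> j \<Longrightarrow> (\<Sum>i=1..j. reward n h i (j-i)) = (\<Sum>i=1..j-1. reward n h i (j-i)) + reward n h j 0"
proof -
  assume "1 \<le> j"
  then obtain j' where j: "j = Suc j'" by (cases j) auto
  show ?thesis unfolding j by simp
qed

lemma I_lower: "1 \<le> j \<Longrightarrow> j \<le> h \<Longrightarrow>
   real n * Pc n h / real h * real ((h - j) choose 3) + 1 \<le> (\<Sum>i=1..j. reward n h i (j-i))"
proof -
  assume j: "1 \<le> j" "j \<le> h"
  have "0 \<le> (\<Sum>i=1..j-1. reward n h i (j-i))" by (intro sum_nonneg reward_nonneg)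
  moreover have "real n * Pc n h / real h * real ((h - j) choose 3) + 1 \<le> reward n h j 0"
    using r0_bounds[of j "h-j" h] j by auto
  ultimately show ?thesis using I_split[OF j(1), of h] by linarith
qed

lemma I_upper: "1 \<le> j \<Longrightarrow> j \<le> h \<Longrightarrow>
   (\<Sum>i=1..j. reward n h i (j-i)) \<le> real h * (real h * ((real n + 1) * Pc n h)) + 1
       + real h * (real h * ((real n + 1) * Pc n h) + 1)"
proof -
  assume j: "1 \<le> j" "j \<le> h"
  define A where "A = real h * ((real n + 1) * Pc n h)"
  have A0: "0 \<le> A" using Pc_nonneg[of h] by (simp add: A_def)
  have "(\<Sum>i=1..j-1. reward n h i (j-i)) \<le> (\<Sum>i=1..j-1. A + 1)"
    by (rule sum_mono) (use reward_pos_le in \<open>auto simp: A_def\<close>)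
  also have "\<dots> = real (j - 1) * (A + 1)" by simp
  also have "\<dots> \<le> real h * (A + 1)" using j A0 by (intro mult_right_mono) auto
  finally have S1: "(\<Sum>i=1..j-1. reward n h i (j-i)) \<le> real h * (A + 1)" .
  have "reward n h j 0 \<le> real (h - j) * A + 1"
    using r0_bounds[of j "h-j" h] j by (auto simp: A_def)
  also have "\<dots> \<le> real h * A + 1" using A0 by (simp add: mult_right_mono)
  finally have S2: "reward n h j 0 \<le> real h * A + 1" .
  show ?thesis using I_split[OF j(1), of h] S1 S2 unfolding A_def by linarith
qed

lemma w_nonneg: "0 \<le> prob n * (1 - prob n) ^ k"
  using p_pos by simp

lemma cost_upper: "1 \<le> h \<Longrightarrow> expected_cost n h \<le> 6 * ((Pc n h)\<^sup>2 * real n * (real h)\<^sup>2)"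
proof -
  assume h: "1 \<le> h"
  define U where "U = real h * (real h * ((real n + 1) * Pc n h)) + 1
       + real h * (real h * ((real n + 1) * Pc n h) + 1)"
  have "expected_cost n h \<le> (\<Sum>j=1..h. prob n * (1 - prob n) ^ (j - 1) * U)"
    unfolding expected_cost_def
    by (rule sum_mono, rule mult_left_mono) (use I_upper w_nonneg in \<open>auto simp: U_def\<close>)
  also have "\<dots> = Pc n h * U" by (simp add: Pc_def sum_distrib_right)
  finally have E: "expected_cost n h \<le> Pc n h * U" .
  define P where "P = Pc n h"
  have P0: "0 \<le> P" using Pc_nonneg by (simp add: P_def)
  have nP: "1 \<le> real n * P" using Pc_ge h by (simp add: P_def)
  have hr: "1 \<le> real h" using h by simp
  have n1: "real n + 1 \<le> 2 * real n" using n by simp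
  define X where "X = P\<^sup>2 * real n * (real h)\<^sup>2"
  have hh: "real h * 1 \<le> real h * real h" using hr by (intro mult_left_mono) auto
  have a1: "P * U = real h * real h * P * P * (real n + 1) * 2 + P * (real h + 1)"
    by (simp add: U_def P_def algebra_simps)
  have a2: "real h * real h * P * P * (real n + 1) * 2 \<le> real h * real h * P * P * (2 * real n) * 2"
    using n1 P0 by (intro mult_right_mono mult_left_mono) auto
  have a3: "P * (real h + 1) \<le> P * (2 * (real h * real h))"
  proof (rule mult_left_mono)
    show "real h + 1 \<le> 2 * (real h * real h)" using hh hr by linarith
  qed (use P0 in auto)
  have a4: "P * (real h * real h) * 1 \<le> P * (real h * real h) * (real n * P)"
    using nP P0 by (intro mult_left_mono) auto
  have "P * U \<le> 6 * X"
    using a1 a2 a3 a4 unfolding X_def by (simp add: power2_eq_square algebra_simps)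
  then show ?thesis using E unfolding X_def P_def by simp
qed


lemma choose_sum: "1 \<le> h \<Longrightarrow> (\<Sum>k<h. ((h - Suc k) choose 3)) = h choose 4"
proof -
  assume h: "1 \<le> h"
  have "(\<Sum>k<h. ((h - Suc k) choose 3)) = (\<Sum>k<h. k choose 3)"
    by (rule sum.nat_diff_reindex)
  moreover have "{..<h} = {..h-1}" using h by auto
  moreover have "(\<Sum>k\<le>h-1. k choose 3) = Suc (h-1) choose Suc 3" by (rule sum_choose_upper)
  ultimately show ?thesis using h by simp
qed

lemma cost_lower: "1 \<le> h \<Longrightarrow> (1/256) * ((Pc n h)\<^sup>2 * real n * (real h)\<^sup>2) \<le> expected_cost n h"
proof -
  assume h: "1 \<le> h"
  define C where "C = real n * Pc n h / real h"
  define w where "w k = prob n * (1 - prob n) ^ k" for k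
  define g where "g k = C * real ((h - Suc k) choose 3) + 1" for k
  have hr: "1 \<le> real h" using h by simp
  have C0: "0 \<le> C" using Pc_nonneg[of h] by (simp add: C_def)
  have C1: "C \<le> 1" using Pc_le[of h] hr by (simp add: C_def)
  have "(\<Sum>j=1..h. prob n * (1 - prob n) ^ (j - 1) * (C * real ((h - j) choose 3) + 1)) \<le> expected_cost n h"
    unfolding expected_cost_def
    by (rule sum_mono, rule mult_left_mono) (use I_lower w_nonneg in \<open>auto simp: C_def\<close>)
  also have "(\<Sum>j=1..h. prob n * (1 - prob n) ^ (j - 1) * (C * real ((h - j) choose 3) + 1))
      = (\<Sum>k=0..<h. w k * g k)"
    by (simp add: sum.atLeast1_atMost_eq atLeast0LessThan w_def g_def)
  finally have E: "(\<Sum>k=0..<h. w k * g k) \<le> expected_cost n h" .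
  have "real h * (\<Sum>k=0..<h. (- w k) * g k) \<le> (\<Sum>k=0..<h. - w k) * (\<Sum>k=0..<h. g k)"
  proof (rule Chebyshev_sum_upper)
    fix i j assume "i \<le> j" "j < h"
    then have "(1 - prob n) ^ j \<le> (1 - prob n) ^ i" using p_pos by (intro power_decreasing) auto
    then show "- w i \<le> - w j" unfolding w_def using p_pos by (simp add: mult_left_mono)
  next
    fix i j assume "i \<le> j" "j < h"
    then have "(h - Suc j) choose 3 \<le> (h - Suc i) choose 3" by (intro binomial_right_mono) auto
    then show "g j \<le> g i" unfolding g_def using C0 by (simp add: mult_left_mono)
  qed
  then have Ch: "(\<Sum>k=0..<h. w k) * (\<Sum>k=0..<h. g k) \<le> real h * (\<Sum>k=0..<h. w k * g k)"
    by (simp add: sum_negf)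
  have Sw: "(\<Sum>k=0..<h. w k) = Pc n h"
    by (simp add: Pc_def w_def sum.atLeast1_atMost_eq atLeast0LessThan)
  have Sg: "(\<Sum>k=0..<h. g k) = C * real (h choose 4) + real h"
  proof -
    have "(\<Sum>k=0..<h. g k) = C * (\<Sum>k<h. real ((h - Suc k) choose 3)) + real h"
      by (simp add: g_def sum.distrib sum_distrib_left atLeast0LessThan)
    also have "(\<Sum>k<h. real ((h - Suc k) choose 3)) = real (h choose 4)"
      using choose_sum[OF h] by (metis of_nat_sum)
    finally show ?thesis .
  qed
  have key: "C * (real h)^4 / 256 \<le> C * real (h choose 4) + real h"
  proof (cases "h \<ge> 4")
    case True
    have "(real h / real 4) ^ 4 \<le> real (h choose 4)" using True by (rule binomial_ge_n_over_k_pow_k)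
    then have "(real h)^4 / 256 \<le> real (h choose 4)" by (simp add: power_divide)
    then have "C * ((real h)^4 / 256) \<le> C * real (h choose 4)" using C0 by (rule mult_left_mono)
    then show ?thesis by simp
  next
    case False
    then have "h \<le> 3" by simp
    then have "real h ^ 3 \<le> 3 ^ 3" by (intro power_mono) auto
    then have "real h * real h ^ 3 \<le> real h * 27" by (intro mult_left_mono) auto
    then have "(real h)^4 \<le> 27 * real h" by (simp add: power_Suc[symmetric] mult.commute del: power_Suc)
    moreover have "C * (real h)^4 \<le> (real h)^4" using C1 mult_right_mono[OF C1, of "(real h)^4"] by simp
    moreover have "0 \<le> C * real (h choose 4)" using C0 by simp
    ultimately show ?thesis by linarith
  qed
  have P0: "0 \<le> Pc n h" by (rule Pc_nonneg)
  have "Pc n h * (C * (real h)^4 / 256) \<le> Pc n h * (C * real (h choose 4) + real h)"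
    using key P0 by (rule mult_left_mono)
  also have "\<dots> \<le> real h * expected_cost n h"
    using Ch Sw Sg E hr by (smt (verit) mult_left_mono)
  finally have F: "Pc n h * (C * (real h)^4 / 256) \<le> real h * expected_cost n h" .
  have "Pc n h * (C * (real h)^4 / 256) = real h * ((1/256) * ((Pc n h)\<^sup>2 * real n * (real h)\<^sup>2))"
    using hr by (simp add: C_def field_simps power2_eq_square power_Suc numeral_eq_Suc)
  then show ?thesis using F hr by simp
qed

end

theorem lemma4p3:
  shows "\<exists>c1 c2 :: real. c1 > 0 \<and> c2 > 0 \<and>
    (\<forall>n h :: nat. n \<ge> 1 \<longrightarrow> h \<ge> 1 \<longrightarrow>
       c1 * ((Pc n h)\<^sup>2 * real n * (real h)\<^sup>2) \<le> expected_cost n h \<and>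
       expected_cost n h \<le> c2 * ((Pc n h)\<^sup>2 * real n * (real h)\<^sup>2))"
proof (rule exI[of _ "1/256"], rule exI[of _ 6], intro conjI allI impI)
  fix n h :: nat assume "n \<ge> 1" "h \<ge> 1"
  then show "1/256 * ((Pc n h)\<^sup>2 * real n * (real h)\<^sup>2) \<le> expected_cost n h"
    by (rule cost_lower)
  show "expected_cost n h \<le> 6 * ((Pc n h)\<^sup>2 * real n * (real h)\<^sup>2)"
    using \<open>n \<ge> 1\<close> \<open>h \<ge> 1\<close> by (rule cost_upper)
qed auto

end
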